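(* The twisted torus $L_\gamma$ is a product torus $S^1(r_1)\times S^1(r_2)\subset\mathbb{C}^2$ if and only if $\rho|H|=2$ identically on the torus.
   Context: Let $\gamma:\mathbb{R}/2\pi\mathbb{Z}\to\mathbb{C}\setminus\{0\}$ be a smooth regular simple closed curve written as $\gamma(\beta)=\rho(\beta)e^{if(\beta)}$ with $\rho>0$ smooth and $2\pi$-periodic and $f$ smooth with $f(\beta+2\pi)=f(\beta)+2k\pi$, $k\in\mathbb{Z}$. The twisted torus $L_\gamma$ is the image of $F(\alpha,\beta)=\frac{\rho(\beta)}{\sqrt2}\left(e^{i(f(\beta)+\alpha)},e^{i(f(\beta)-\alpha)}\right)$, $\alpha,\beta\in[0,2\pi)$, in $\mathbb{C}^2$ with the Euclidean metric. $H$ is its mean curvature vector ($g$-trace of the second fundamental form, no normalizing factor, $g$ the induced metric), and $\rho$ is regarded as the function $(\alpha,\beta)\mapsto\rho(\beta)$. For $r>0$, $S^1(r)=\{z\in\mathbb{C}:|z|=r\}$. *)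

theory Defs
  imports "HOL-Analysis.Analysis"
begin

definition smooth_real :: "(real \<Rightarrow> real) \<Rightarrow> bool" where
  "smooth_real u \<longleftrightarrow> (\<forall>n. \<forall>x. ((deriv ^^ n) u) differentiable (at x))"

definition pd1 :: "(real \<Rightarrow> real \<Rightarrow> 'a::real_normed_vector) \<Rightarrow> real \<Rightarrow> real \<Rightarrow> 'a" where
  "pd1 X a b = vector_derivative (\<lambda>s. X s b) (at a)"

definition pd2 :: "(real \<Rightarrow> real \<Rightarrow> 'a::real_normed_vector) \<Rightarrow> real \<Rightarrow> real \<Rightarrow> 'a" where
  "pd2 X a b = vector_derivative (\<lambda>t. X a t) (at b)"

text \<open>Mean curvature vector (trace of the second fundamental form w.r.t. the induced metric,
  no normalising factor) of a parametrised surface X in a real inner product space.\<close>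
definition mean_curv_vec :: "(real \<Rightarrow> real \<Rightarrow> 'a::real_inner) \<Rightarrow> real \<Rightarrow> real \<Rightarrow> 'a" where
  "mean_curv_vec X a b =
    (let Xa = pd1 X a b; Xb = pd2 X a b;
         Xaa = pd1 (pd1 X) a b; Xab = pd2 (pd1 X) a b; Xbb = pd2 (pd2 X) a b;
         gE = inner Xa Xa; gF = inner Xa Xb; gG = inner Xb Xb;
         D = gE * gG - gF * gF;
         i11 = gG / D; i12 = - gF / D; i22 = gE / D;
         tang = (\<lambda>v. (i11 * inner v Xa + i12 * inner v Xb) *\<^sub>R Xa
                   + (i12 * inner v Xa + i22 * inner v Xb) *\<^sub>R Xb);
         nor = (\<lambda>v. v - tang v)
     in i11 *\<^sub>R nor Xaa + (2 * i12) *\<^sub>R nor Xab + i22 *\<^sub>R nor Xbb)"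

definition twisted_F :: "(real \<Rightarrow> real) \<Rightarrow> (real \<Rightarrow> real) \<Rightarrow> real \<Rightarrow> real \<Rightarrow> complex \<times> complex" where
  "twisted_F \<rho> f \<alpha> \<beta> =
     (complex_of_real (\<rho> \<beta> / sqrt 2) * exp (\<i> * complex_of_real (f \<beta> + \<alpha>)),
      complex_of_real (\<rho> \<beta> / sqrt 2) * exp (\<i> * complex_of_real (f \<beta> - \<alpha>)))"

definition twisted_torus :: "(real \<Rightarrow> real) \<Rightarrow> (real \<Rightarrow> real) \<Rightarrow> (complex \<times> complex) set" where
  "twisted_torus \<rho> f = (\<lambda>(\<alpha>, \<beta>). twisted_F \<rho> f \<alpha> \<beta>) ` ({0..<2*pi} \<times> {0..<2*pi})"

end

theory Submission
  imports Defs
begin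



definition mcv :: "'a::real_inner \<Rightarrow> 'a \<Rightarrow> 'a \<Rightarrow> 'a \<Rightarrow> 'a \<Rightarrow> 'a" where
  "mcv Xa Xb Xaa Xab Xbb =
    (let gE = inner Xa Xa; gF = inner Xa Xb; gG = inner Xb Xb;
         D = gE * gG - gF * gF;
         i11 = gG / D; i12 = - gF / D; i22 = gE / D;
         tang = (\<lambda>v. (i11 * inner v Xa + i12 * inner v Xb) *\<^sub>R Xa
                   + (i12 * inner v Xa + i22 * inner v Xb) *\<^sub>R Xb);
         nor = (\<lambda>v. v - tang v)
     in i11 *\<^sub>R nor Xaa + (2 * i12) *\<^sub>R nor Xab + i22 *\<^sub>R nor Xbb)"

lemma mean_curv_vec_mcv: "mean_curv_vec X a b =
  mcv (pd1 X a b) (pd2 X a b) (pd1 (pd1 X) a b) (pd2 (pd1 X) a b) (pd2 (pd2 X) a b)"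
  unfolding mean_curv_vec_def mcv_def Let_def ..

lemma mcv_iso:
  assumes "linear T" "\<And>x y. inner (T x) (T y) = inner x y"
  shows "mcv (T a) (T b) (T c) (T d) (T e) = T (mcv a b c d e)"
  unfolding mcv_def Let_def using assms
  by (simp add: linear_add linear_diff linear_scale)

definition TT :: "complex \<Rightarrow> complex \<Rightarrow> complex \<times> complex \<Rightarrow> complex \<times> complex" where
  "TT e1 e2 v = (fst v * e1, snd v * e2)"

lemma inner_mult_unit:
  fixes x y e :: complex assumes "cmod e = 1"
  shows "inner (x * e) (y * e) = inner x y"
proof -
  have h: "(Re e)^2 + (Im e)^2 = 1" using assms by (simp add: cmod_def)
  have "inner (x * e) (y * e) = (Re x * Re y + Im x * Im y) * ((Re e)^2 + (Im e)^2)"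
    by (simp add: inner_complex_def algebra_simps power2_eq_square)
  then show ?thesis using h by (simp add: inner_complex_def)
qed

lemma TT_linear: "linear (TT e1 e2)"
  unfolding linear_iff TT_def by (simp add: algebra_simps scaleR_conv_of_real)

lemma TT_inner: "cmod e1 = 1 \<Longrightarrow> cmod e2 = 1 \<Longrightarrow> inner (TT e1 e2 x) (TT e1 e2 y) = inner x y"
  unfolding TT_def by (cases x; cases y) (simp add: inner_mult_unit inner_Pair)

lemma perp_part:
  fixes w g :: complex assumes "g \<noteq> 0"
  shows "w - (inner w g / (cmod g)^2) *\<^sub>R g = \<i> * g * of_real (Im (w * cnj g) / (cmod g)^2)"
proof -
  have n: "(cmod g)^2 = (Re g)^2 + (Im g)^2" by (simp add: cmod_def)
  have nz: "(Re g)^2 + (Im g)^2 \<noteq> 0" using assms by (simp add: complex_eq_iff)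
  show ?thesis unfolding n using nz
    by (simp add: complex_eq_iff inner_complex_def field_simps power2_eq_square) (simp add: algebra_simps)?
qed

lemma mcv_orth:
  assumes "inner Xa Xb = 0" "inner Xa Xa \<noteq> 0" "inner Xb Xb \<noteq> 0"
  shows "mcv Xa Xb Xaa Xab Xbb =
    (1 / inner Xa Xa) *\<^sub>R (Xaa - (inner Xaa Xa / inner Xa Xa) *\<^sub>R Xa - (inner Xaa Xb / inner Xb Xb) *\<^sub>R Xb)
  + (1 / inner Xb Xb) *\<^sub>R (Xbb - (inner Xbb Xa / inner Xa Xa) *\<^sub>R Xa - (inner Xbb Xb / inner Xb Xb) *\<^sub>R Xb)"
  unfolding mcv_def Let_def using assms by (simp add: inner_commute diff_diff_eq)

lemma mcv_formula:
  fixes x g u k :: complex and d :: "complex \<times> complex"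
  assumes x0: "x \<noteq> 0" and g0: "g \<noteq> 0"
  shows "mcv (x, -x) (g, g) (u, u) d (k, k) =
    (let \<eta> = \<i> * g * of_real (Im (u * cnj g) / (2 * (cmod x)^2 * (cmod g)^2) + Im (k * cnj g) / (2 * (cmod g)^2 * (cmod g)^2)) in (\<eta>, \<eta>))"
proof -
  have nx: "(cmod x)^2 \<noteq> 0" using x0 by simp
  have ng: "(cmod g)^2 \<noteq> 0" using g0 by simp
  have gE: "inner (x, -x) (x, -x) = 2 * (cmod x)^2" by (simp only: inner_Pair) (simp add: dot_square_norm)
  have gF: "inner (x, -x) (g, g) = 0" by (simp add: inner_Pair)
  have gG: "inner (g, g) (g, g) = 2 * (cmod g)^2" by (simp only: inner_Pair) (simp add: dot_square_norm)
  have o1: "\<And>v. inner (v, v) (x, -x) = 0" by (simp add: inner_Pair)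
  have o2: "\<And>v. inner (v, v) (g, g) = 2 * inner v g" by (simp add: inner_Pair)
  have nor: "\<And>v. (v, v) - (inner (v, v) (x, -x) / inner (x, -x) (x, -x)) *\<^sub>R (x, -x) - (inner (v, v) (g, g) / inner (g, g) (g, g)) *\<^sub>R (g, g)
     = (\<i> * g * of_real (Im (v * cnj g) / (cmod g)^2), \<i> * g * of_real (Im (v * cnj g) / (cmod g)^2))"
  proof -
    fix v
    have "inner (v, v) (g, g) / inner (g, g) (g, g) = inner v g / (cmod g)^2"
      unfolding gG by (simp only: o2)
    then have "(v, v) - (inner (v, v) (x, -x) / inner (x, -x) (x, -x)) *\<^sub>R (x, -x) - (inner (v, v) (g, g) / inner (g, g) (g, g)) *\<^sub>R (g, g)
      = (v - (inner v g / (cmod g)^2) *\<^sub>R g, v - (inner v g / (cmod g)^2) *\<^sub>R g)"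
      by (simp only: o1) simp
    then show "?thesis v" by (simp only: perp_part[OF g0, of v])
  qed
  define A where "A = Im (u * cnj g)"
  define B where "B = Im (k * cnj g)"
  define X where "X = (cmod x)^2"
  define Gm where "Gm = (cmod g)^2"
  have "mcv (x, -x) (g, g) (u, u) d (k, k) = (1 / (2 * X)) *\<^sub>R (\<i> * g * of_real (A / Gm), \<i> * g * of_real (A / Gm))
     + (1 / (2 * Gm)) *\<^sub>R (\<i> * g * of_real (B / Gm), \<i> * g * of_real (B / Gm))"
    apply (subst mcv_orth)
       apply (unfold nor)
    using gF gE gG nx ng by (simp_all add: A_def B_def X_def Gm_def)
  also have "\<dots> = (let \<eta> = \<i> * g * of_real (A / (2 * X * Gm) + B / (2 * Gm * Gm)) in (\<eta>, \<eta>))"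
    by (simp add: scaleR_conv_of_real algebra_simps Let_def)
  finally show ?thesis by (simp add: A_def B_def X_def Gm_def)
qed



lemma has_vd_cexp:
  assumes "(g has_real_derivative g') (at t)"
  shows "((\<lambda>t. exp (\<i> * complex_of_real (g t))) has_vector_derivative
           (\<i> * of_real g' * exp (\<i> * complex_of_real (g t)))) (at t)"
proof -
  have 1: "((\<lambda>t. \<i> * complex_of_real (g t)) has_vector_derivative (\<i> * of_real g')) (at t)"
    by (intro has_vector_derivative_mult_right has_vector_derivative_of_real assms)
  have 2: "(exp has_field_derivative exp (\<i> * complex_of_real (g t))) (at (\<i> * complex_of_real (g t)))"
    by (rule DERIV_exp)
  from field_vector_diff_chain_at[OF 1 2] show ?thesis by (simp add: o_def)
qed

context
  fixes \<rho> f r1 r2 f1 f2 :: "real \<Rightarrow> real"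
  assumes dr1: "\<And>x. (\<rho> has_real_derivative r1 x) (at x)"
    and dr2: "\<And>x. (r1 has_real_derivative r2 x) (at x)"
    and df1: "\<And>x. (f has_real_derivative f1 x) (at x)"
    and df2: "\<And>x. (f1 has_real_derivative f2 x) (at x)"
begin

definition "E1 a b = exp (\<i> * complex_of_real (f b + a))"
definition "E2 a b = exp (\<i> * complex_of_real (f b - a))"
definition "CC b = complex_of_real (\<rho> b / sqrt 2)"
definition "Cg b = complex_of_real (r1 b / sqrt 2) + \<i> * complex_of_real (\<rho> b * f1 b / sqrt 2)"
definition "Ck b = complex_of_real (r2 b / sqrt 2) + \<i> * complex_of_real ((r1 b * f1 b + \<rho> b * f2 b) / sqrt 2)
   + \<i> * complex_of_real (f1 b) * Cg b"

lemma F_eq: "twisted_F \<rho> f = (\<lambda>a b. (CC b * E1 a b, CC b * E2 a b))"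
  by (auto simp: twisted_F_def CC_def E1_def E2_def fun_eq_iff)

lemma dE1a: "((\<lambda>s. E1 s b) has_vector_derivative \<i> * E1 a b) (at a)"
proof -
  have "((\<lambda>s. f b + s) has_real_derivative 1) (at a)" by (auto intro!: derivative_eq_intros)
  from has_vd_cexp[OF this] show ?thesis unfolding E1_def by simp
qed

lemma dE2a: "((\<lambda>s. E2 s b) has_vector_derivative - \<i> * E2 a b) (at a)"
proof -
  have "((\<lambda>s. f b - s) has_real_derivative -1) (at a)" by (auto intro!: derivative_eq_intros)
  from has_vd_cexp[OF this] show ?thesis unfolding E2_def by simp
qed

lemma dE1b: "((\<lambda>t. E1 a t) has_vector_derivative \<i> * of_real (f1 b) * E1 a b) (at b)"
proof -
  have "((\<lambda>t. f t + a) has_real_derivative f1 b) (at b)" using df1[of b] by (auto intro!: derivative_eq_intros)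
  from has_vd_cexp[OF this] show ?thesis unfolding E1_def by simp
qed

lemma dE2b: "((\<lambda>t. E2 a t) has_vector_derivative \<i> * of_real (f1 b) * E2 a b) (at b)"
proof -
  have "((\<lambda>t. f t - a) has_real_derivative f1 b) (at b)" using df1[of b] by (auto intro!: derivative_eq_intros)
  from has_vd_cexp[OF this] show ?thesis unfolding E2_def by simp
qed

lemma dCC: "(CC has_vector_derivative complex_of_real (r1 b / sqrt 2)) (at b)"
  unfolding CC_def by (auto intro!: derivative_eq_intros dr1)

lemma dCg: "(Cg has_vector_derivative (Ck b - \<i> * complex_of_real (f1 b) * Cg b)) (at b)"
  unfolding Cg_def Ck_def
  by (auto intro!: derivative_eq_intros dr1 dr2 df1 df2 simp: algebra_simps)

lemma pd1F: "pd1 (twisted_F \<rho> f) = (\<lambda>a b. (CC b * (\<i> * E1 a b), CC b * (- \<i> * E2 a b)))"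
  unfolding F_eq pd1_def
  by (intro ext vector_derivative_at has_vector_derivative_Pair has_vector_derivative_mult_right dE1a dE2a)

lemma pd2F: "pd2 (twisted_F \<rho> f) = (\<lambda>a b. (Cg b * E1 a b, Cg b * E2 a b))"
  unfolding F_eq pd2_def
proof (intro ext vector_derivative_at has_vector_derivative_Pair)
  fix a b
  show "((\<lambda>t. CC t * E1 a t) has_vector_derivative Cg b * E1 a b) (at b)"
    using has_vector_derivative_mult[OF dCC[of b] dE1b[of a b]]
    by (simp add: Cg_def CC_def algebra_simps)
  show "((\<lambda>t. CC t * E2 a t) has_vector_derivative Cg b * E2 a b) (at b)"
    using has_vector_derivative_mult[OF dCC[of b] dE2b[of a b]]
    by (simp add: Cg_def CC_def algebra_simps)
qed

lemma pd11F: "pd1 (pd1 (twisted_F \<rho> f)) a b = (- (CC b * E1 a b), - (CC b * E2 a b))"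
  unfolding pd1F pd1_def
  apply (intro vector_derivative_at has_vector_derivative_Pair)
  using has_vector_derivative_mult_right[OF dE1a[of b a], of "CC b * \<i>"] has_vector_derivative_mult_right[OF dE2a[of b a], of "- CC b * \<i>"]
  by (auto simp: algebra_simps)

lemma pd21F: "pd2 (pd1 (twisted_F \<rho> f)) a b = (\<i> * Cg b * E1 a b, - \<i> * Cg b * E2 a b)"
  unfolding pd1F pd2_def
proof (intro vector_derivative_at has_vector_derivative_Pair)
  show "((\<lambda>t. CC t * (\<i> * E1 a t)) has_vector_derivative \<i> * Cg b * E1 a b) (at b)"
    using has_vector_derivative_mult[OF dCC[of b] has_vector_derivative_mult_right[OF dE1b[of a b], of \<i>]]
    by (simp add: Cg_def CC_def algebra_simps)
  show "((\<lambda>t. CC t * (- \<i> * E2 a t)) has_vector_derivative - \<i> * Cg b * E2 a b) (at b)"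
    using has_vector_derivative_mult[OF dCC[of b] has_vector_derivative_mult_right[OF dE2b[of a b], of "- \<i>"]]
    by (simp add: Cg_def CC_def algebra_simps)
qed

lemma pd22F: "pd2 (pd2 (twisted_F \<rho> f)) a b = (Ck b * E1 a b, Ck b * E2 a b)"
  unfolding pd2F pd2_def
proof (intro vector_derivative_at has_vector_derivative_Pair)
  show "((\<lambda>t. Cg t * E1 a t) has_vector_derivative Ck b * E1 a b) (at b)"
    using has_vector_derivative_mult[OF dCg[of b] dE1b[of a b]]
    by (simp add: algebra_simps)
  show "((\<lambda>t. Cg t * E2 a t) has_vector_derivative Ck b * E2 a b) (at b)"
    using has_vector_derivative_mult[OF dCg[of b] dE2b[of a b]]
    by (simp add: algebra_simps)
qed


lemma E1_unit: "cmod (E1 a b) = 1" unfolding E1_def by (simp add: norm_exp_i_times)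
lemma E2_unit: "cmod (E2 a b) = 1" unfolding E2_def by (simp add: norm_exp_i_times)

lemma H_norm:
  assumes rpos: "\<rho> b > 0" and Gpos: "r1 b ^ 2 + (\<rho> b * f1 b) ^ 2 > 0"
  shows "norm (mean_curv_vec (twisted_F \<rho> f) a b) =
    (let G = r1 b ^ 2 + (\<rho> b * f1 b) ^ 2;
         N = \<rho> b ^ 2 * f1 b ^ 3 + 2 * r1 b ^ 2 * f1 b + \<rho> b * r1 b * f2 b - \<rho> b * r2 b * f1 b
     in \<bar>f1 b * G + N\<bar> / (G * sqrt G))"
proof -
  let ?T = "TT (E1 a b) (E2 a b)"
  have lin: "linear ?T" by (rule TT_linear)
  have inn: "\<And>x y. inner (?T x) (?T y) = inner x y" by (rule TT_inner[OF E1_unit E2_unit])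
  have p1: "pd1 (twisted_F \<rho> f) a b = ?T (CC b * \<i>, - (CC b * \<i>))"
    by (simp add: pd1F TT_def algebra_simps)
  have p2: "pd2 (twisted_F \<rho> f) a b = ?T (Cg b, Cg b)"
    by (simp add: pd2F TT_def algebra_simps)
  have p11: "pd1 (pd1 (twisted_F \<rho> f)) a b = ?T (- CC b, - CC b)"
    by (simp add: pd11F TT_def algebra_simps)
  have p21: "pd2 (pd1 (twisted_F \<rho> f)) a b = ?T (\<i> * Cg b, - \<i> * Cg b)"
    by (simp add: pd21F TT_def algebra_simps)
  have p22: "pd2 (pd2 (twisted_F \<rho> f)) a b = ?T (Ck b, Ck b)"
    by (simp add: pd22F TT_def algebra_simps)
  have s2: "sqrt 2 * sqrt 2 = (2::real)" by simp
  have x0: "CC b * \<i> \<noteq> 0" using rpos by (simp add: CC_def)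
  have nCg: "(cmod (Cg b))^2 = (r1 b ^ 2 + (\<rho> b * f1 b) ^ 2) / 2"
    by (simp add: Cg_def cmod_def power_divide power_mult_distrib)
  have g0: "Cg b \<noteq> 0" using nCg Gpos by auto
  have nx: "(cmod (CC b * \<i>))^2 = \<rho> b ^ 2 / 2"
    by (simp add: CC_def norm_mult norm_divide power_divide)
  have IA: "Im (- CC b * cnj (Cg b)) = \<rho> b ^ 2 * f1 b / 2"
    by (simp add: CC_def Cg_def power2_eq_square field_simps)
  have IB: "Im (Ck b * cnj (Cg b)) = (\<rho> b ^ 2 * f1 b ^ 3 + 2 * r1 b ^ 2 * f1 b + \<rho> b * r1 b * f2 b - \<rho> b * r2 b * f1 b) / 2"
    by (simp add: Ck_def Cg_def power2_eq_square power3_eq_cube field_simps)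
  define \<eta> where "\<eta> = \<i> * Cg b * of_real (Im (- CC b * cnj (Cg b)) / (2 * (cmod (CC b * \<i>))^2 * (cmod (Cg b))^2)
       + Im (Ck b * cnj (Cg b)) / (2 * (cmod (Cg b))^2 * (cmod (Cg b))^2))"
  have "mean_curv_vec (twisted_F \<rho> f) a b = ?T (\<eta>, \<eta>)"
    unfolding mean_curv_vec_mcv p1 p2 p11 p21 p22 mcv_iso[OF lin inn]
    using mcv_formula[OF x0 g0, of "- CC b" "(\<i> * Cg b, - \<i> * Cg b)" "Ck b"]
    by (simp add: \<eta>_def Let_def)
  then have "norm (mean_curv_vec (twisted_F \<rho> f) a b) = sqrt 2 * cmod \<eta>"
    by (simp add: TT_def norm_Pair norm_mult E1_unit E2_unit real_sqrt_mult)
  also have "\<dots> = sqrt 2 * cmod (Cg b) * \<bar>Im (- CC b * cnj (Cg b)) / (2 * (cmod (CC b * \<i>))^2 * (cmod (Cg b))^2)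
       + Im (Ck b * cnj (Cg b)) / (2 * (cmod (Cg b))^2 * (cmod (Cg b))^2)\<bar>"
    unfolding \<eta>_def norm_mult norm_of_real norm_ii by simp
  finally have fin: "norm (mean_curv_vec (twisted_F \<rho> f) a b) = sqrt 2 * cmod (Cg b) * \<bar>Im (- CC b * cnj (Cg b)) / (2 * (cmod (CC b * \<i>))^2 * (cmod (Cg b))^2)
       + Im (Ck b * cnj (Cg b)) / (2 * (cmod (Cg b))^2 * (cmod (Cg b))^2)\<bar>" .
  define G where "G = r1 b ^ 2 + (\<rho> b * f1 b) ^ 2"
  define N where "N = \<rho> b ^ 2 * f1 b ^ 3 + 2 * r1 b ^ 2 * f1 b + \<rho> b * r1 b * f2 b - \<rho> b * r2 b * f1 b"
  have G0: "G > 0" using Gpos by (simp add: G_def)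
  have cg: "cmod (Cg b) = sqrt (G / 2)" using nCg unfolding G_def
    by (metis norm_ge_zero real_sqrt_unique)
  have sq: "sqrt 2 * sqrt (G / 2) = sqrt G" by (simp add: real_sqrt_mult[symmetric])
  have inner: "Im (- CC b * cnj (Cg b)) / (2 * (cmod (CC b * \<i>))^2 * (cmod (Cg b))^2)
       + Im (Ck b * cnj (Cg b)) / (2 * (cmod (Cg b))^2 * (cmod (Cg b))^2) = (f1 b * G + N) / G^2"
    unfolding IA IB nx nCg using rpos G0 unfolding G_def[symmetric] N_def[symmetric]
    by (simp add: field_simps power2_eq_square)
  have sG: "sqrt G * sqrt G = G" using G0 by simp
  have "sqrt G * \<bar>(f1 b * G + N) / G^2\<bar> = \<bar>f1 b * G + N\<bar> / (G * sqrt G)"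
    using G0 sG by (simp add: abs_divide field_simps power2_eq_square)
  moreover have "norm (mean_curv_vec (twisted_F \<rho> f) a b) = sqrt 2 * sqrt (G / 2) * \<bar>(f1 b * G + N) / G^2\<bar>"
    using fin[unfolded inner] unfolding cg .
  ultimately show ?thesis unfolding Let_def G_def[symmetric] N_def[symmetric] sq by simp
qed

end


lemma per_int:
  fixes g :: "real \<Rightarrow> 'b"
  assumes "\<forall>x. g (x + p) = g x" shows "g (x + of_int n * p) = g x"
proof (induct n rule: int_induct[where k=0])
  case base then show ?case by simp
next
  case (step1 i)
  have "g (x + of_int (i + 1) * p) = g ((x + of_int i * p) + p)" by (simp add: algebra_simps)
  then show ?case using assms step1 by simp
next
  case (step2 i)
  have "g (x + of_int i * p) = g ((x + of_int (i - 1) * p) + p)" by (simp add: algebra_simps)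
  then show ?case using assms step2 by simp
qed

lemma mod2pi: fixes x :: real shows "x - 2*pi * of_int \<lfloor>x/(2*pi)\<rfloor> \<in> {0..<2*pi}"
proof -
  have a: "of_int \<lfloor>x/(2*pi)\<rfloor> \<le> x/(2*pi)" "x/(2*pi) < of_int \<lfloor>x/(2*pi)\<rfloor> + 1"
    by linarith+
  have p: "2*pi > 0" by simp
  from mult_right_mono[OF a(1) less_imp_le[OF p]] have "of_int \<lfloor>x/(2*pi)\<rfloor> * (2*pi) \<le> x" by simp
  moreover from mult_strict_right_mono[OF a(2) p] have "x < (of_int \<lfloor>x/(2*pi)\<rfloor> + 1) * (2*pi)" by simp
  ultimately show ?thesis by (auto simp: algebra_simps)
qed

lemma per_red:
  fixes g :: "real \<Rightarrow> 'b"
  assumes "\<forall>x. g (x + 2*pi) = g x" shows "\<exists>y\<in>{0..<2*pi}. g x = g y"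
proof -
  let ?y = "x - 2*pi * of_int \<lfloor>x/(2*pi)\<rfloor>"
  have "g (?y + of_int \<lfloor>x/(2*pi)\<rfloor> * (2*pi)) = g ?y" by (rule per_int[OF assms])
  then have "g x = g ?y" by (simp add: algebra_simps)
  then show ?thesis using mod2pi[of x] by blast
qed

lemma exp_shift: "exp (\<i> * complex_of_real (\<theta> + 2*pi * of_int n)) = exp (\<i> * complex_of_real \<theta>)"
proof -
  have "\<i> * complex_of_real (\<theta> + 2*pi * of_int n) = \<i> * complex_of_real \<theta> + \<i> * (of_int n * (of_real pi * 2))"
    by (simp add: algebra_simps)
  then show ?thesis by simp
qed

lemma torus_surj:
  fixes f :: "real \<Rightarrow> real" and k :: int and c :: real
  assumes cont: "\<forall>x. isCont f x" and fk: "f (2*pi) = f 0 + 2 * of_int k * pi" and k0: "k \<noteq> 0"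
    and z: "cmod z = c" and w: "cmod w = c"
  shows "\<exists>\<alpha>\<in>{0..<2*pi}. \<exists>\<beta>\<in>{0..<2*pi}. z = of_real c * exp (\<i> * of_real (f \<beta> + \<alpha>))
                 \<and> w = of_real c * exp (\<i> * of_real (f \<beta> - \<alpha>))"
proof -
  define \<theta>1 where "\<theta>1 = Arg z"
  define \<theta>2 where "\<theta>2 = Arg w"
  have ze: "z = of_real c * exp (\<i> * of_real \<theta>1)"
    using rcis_cmod_Arg[of z] unfolding \<theta>1_def z rcis_def cis_conv_exp by simp
  have we: "w = of_real c * exp (\<i> * of_real \<theta>2)"
    using rcis_cmod_Arg[of w] unfolding \<theta>2_def w rcis_def cis_conv_exp by simp
  define t where "t = (\<theta>1 + \<theta>2) / 2"
  have "\<exists>\<beta>\<in>{0..<2*pi}. \<exists>m::int. f \<beta> = t + 2*pi * of_int m"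
  proof (cases "k > 0")
    case True
    define y where "y = (t - f 0) - 2*pi * of_int \<lfloor>(t - f 0)/(2*pi)\<rfloor>"
    have y: "0 \<le> y" "y < 2*pi" using mod2pi[of "t - f 0"] unfolding y_def by auto
    have "1 \<le> real_of_int k" using True by simp
    then have "f 0 + 2*pi \<le> f (2*pi)" unfolding fk by (simp add: pi_gt_zero)
    then obtain \<beta> where b: "0 \<le> \<beta>" "\<beta> \<le> 2*pi" "f \<beta> = f 0 + y"
      using IVT[of f 0 "f 0 + y" "2*pi"] y cont by auto
    have "\<beta> \<noteq> 2*pi" using b y \<open>f 0 + 2*pi \<le> f (2*pi)\<close> by auto
    moreover have "f \<beta> = t + 2*pi * of_int (- \<lfloor>(t - f 0)/(2*pi)\<rfloor>)" using b(3) unfolding y_def by simp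
    ultimately show ?thesis using b by (intro bexI[of _ \<beta>] exI[of _ "- \<lfloor>(t - f 0)/(2*pi)\<rfloor>"]) auto
  next
    case False
    then have "k < 0" using k0 by simp
    define y where "y = (f 0 - t) - 2*pi * of_int \<lfloor>(f 0 - t)/(2*pi)\<rfloor>"
    have y: "0 \<le> y" "y < 2*pi" using mod2pi[of "f 0 - t"] unfolding y_def by auto
    have "real_of_int k \<le> -1" using \<open>k < 0\<close> by simp
    then have "real_of_int k * pi \<le> -1 * pi" by (intro mult_right_mono) (auto simp: pi_ge_zero)
    then have "f (2*pi) \<le> f 0 - 2*pi" unfolding fk by linarith
    then obtain \<beta> where b: "0 \<le> \<beta>" "\<beta> \<le> 2*pi" "f \<beta> = f 0 - y"
      using IVT2[where f=f and a=0 and b="2*pi" and y="f 0 - y"] y cont by auto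
    have "\<beta> \<noteq> 2*pi" using b y \<open>f (2*pi) \<le> f 0 - 2*pi\<close> by auto
    moreover have "f \<beta> = t + 2*pi * of_int (\<lfloor>(f 0 - t)/(2*pi)\<rfloor>)" using b(3) unfolding y_def by simp
    ultimately show ?thesis using b by (intro bexI[of _ \<beta>] exI[of _ "\<lfloor>(f 0 - t)/(2*pi)\<rfloor>"]) auto
  qed
  then obtain \<beta> m where b: "\<beta> \<in> {0..<2*pi}" "f \<beta> = t + 2*pi * of_int m" by blast
  define \<alpha>0 where "\<alpha>0 = (\<theta>1 - \<theta>2) / 2"
  define n where "n = \<lfloor>\<alpha>0/(2*pi)\<rfloor>"
  define \<alpha> where "\<alpha> = \<alpha>0 - 2*pi * of_int n"
  have a: "\<alpha> \<in> {0..<2*pi}" using mod2pi[of \<alpha>0] unfolding \<alpha>_def n_def .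
  have e1: "f \<beta> + \<alpha> = \<theta>1 + 2*pi * of_int (m - n)"
    unfolding b(2) \<alpha>_def \<alpha>0_def t_def by (simp add: field_simps)
  have e2: "f \<beta> - \<alpha> = \<theta>2 + 2*pi * of_int (m + n)"
    unfolding b(2) \<alpha>_def \<alpha>0_def t_def by (simp add: field_simps)
  have "z = of_real c * exp (\<i> * of_real (f \<beta> + \<alpha>))" unfolding e1 exp_shift by (rule ze)
  moreover have "w = of_real c * exp (\<i> * of_real (f \<beta> - \<alpha>))" unfolding e2 exp_shift by (rule we)
  ultimately show ?thesis using a b(1) by blast
qed



lemma Q_deriv:
  fixes \<rho> r1 f1 :: "real \<Rightarrow> real"
  assumes d1: "(\<rho> has_real_derivative r1 x) (at x)" and d2: "(r1 has_real_derivative r2x) (at x)"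
    and d3: "(f1 has_real_derivative f2x) (at x)"
    and G0: "r1 x ^ 2 + (\<rho> x * f1 x) ^ 2 > 0"
  shows "((\<lambda>x. \<rho> x ^ 2 - \<epsilon> * \<rho> x ^ 3 * f1 x / sqrt (r1 x ^ 2 + (\<rho> x * f1 x) ^ 2)) has_real_derivative
     \<rho> x * r1 x * (2 - \<epsilon> * \<rho> x * ((f1 x * (r1 x ^ 2 + (\<rho> x * f1 x) ^ 2) +
        (\<rho> x ^ 2 * f1 x ^ 3 + 2 * r1 x ^ 2 * f1 x + \<rho> x * r1 x * f2x - \<rho> x * r2x * f1 x))
        / ((r1 x ^ 2 + (\<rho> x * f1 x) ^ 2) * sqrt (r1 x ^ 2 + (\<rho> x * f1 x) ^ 2))))) (at x)"
proof -
  define G where "G = r1 x ^ 2 + (\<rho> x * f1 x) ^ 2"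
  have G0': "G > 0" using G0 by (simp add: G_def)
  have dG: "((\<lambda>x. r1 x ^ 2 + (\<rho> x * f1 x) ^ 2) has_real_derivative
      2 * r1 x * r2x + 2 * (\<rho> x * f1 x) * (r1 x * f1 x + \<rho> x * f2x)) (at x)"
    by (auto intro!: derivative_eq_intros d1 d2 d3)
  have dS: "((\<lambda>x. sqrt (r1 x ^ 2 + (\<rho> x * f1 x) ^ 2)) has_real_derivative
      (2 * r1 x * r2x + 2 * (\<rho> x * f1 x) * (r1 x * f1 x + \<rho> x * f2x)) * (inverse (sqrt G) / 2)) (at x)"
    using DERIV_chain2[OF DERIV_real_sqrt[OF G0] dG] by (simp add: G_def mult.commute)
  have sG: "sqrt G * sqrt G = G" using G0' by simp
  have sG0: "sqrt G > 0" using G0' by simp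
  have a: "((\<lambda>x. \<rho> x ^ 2) has_real_derivative 2 * \<rho> x * r1 x) (at x)"
    by (auto intro!: derivative_eq_intros d1)
  have b: "((\<lambda>x. \<epsilon> * \<rho> x ^ 3 * f1 x) has_real_derivative \<epsilon> * (3 * \<rho> x ^ 2 * r1 x * f1 x + \<rho> x ^ 3 * f2x)) (at x)"
    by (auto intro!: derivative_eq_intros d1 d3 simp: algebra_simps power2_eq_square power3_eq_cube)
  have c: "sqrt (r1 x ^ 2 + (\<rho> x * f1 x) ^ 2) \<noteq> 0" using real_sqrt_gt_zero[OF G0] by linarith
  note e = DERIV_diff[OF a DERIV_divide[OF b dS c]]
  show ?thesis
    apply (rule DERIV_cong[OF e])
    unfolding G_def[symmetric]
    using G0' sG0
    apply (simp add: field_simps power2_eq_square power3_eq_cube)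
    using sG unfolding G_def
    apply algebra
    done
qed

theorem mainTheorem7:
  fixes \<rho> f :: "real \<Rightarrow> real" and k :: int
  assumes smooth_rho: "smooth_real \<rho>"
    and smooth_f: "smooth_real f"
    and rho_pos: "\<forall>\<beta>. \<rho> \<beta> > 0"
    and rho_per: "\<forall>\<beta>. \<rho> (\<beta> + 2*pi) = \<rho> \<beta>"
    and f_per: "\<forall>\<beta>. f (\<beta> + 2*pi) = f \<beta> + 2 * of_int k * pi"
    and regular: "\<forall>\<beta>. vector_derivative (\<lambda>t. complex_of_real (\<rho> t) * exp (\<i> * complex_of_real (f t))) (at \<beta>) \<noteq> 0"
    and simple: "inj_on (\<lambda>t. complex_of_real (\<rho> t) * exp (\<i> * complex_of_real (f t))) {0..<2*pi}"
  shows "(\<exists>r1 r2. r1 > 0 \<and> r2 > 0 \<and>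
            twisted_torus \<rho> f = {(z, w). cmod z = r1 \<and> cmod w = r2})
         \<longleftrightarrow> (\<forall>\<alpha>\<in>{0..<2*pi}. \<forall>\<beta>\<in>{0..<2*pi}.
                \<rho> \<beta> * norm (mean_curv_vec (twisted_F \<rho> f) \<alpha> \<beta>) = 2)"
proof -
  define r1 where "r1 = deriv \<rho>"
  define r2 where "r2 = deriv r1"
  define f1 where "f1 = deriv f"
  define f2 where "f2 = deriv f1"
  have smr: "\<And>n x. ((deriv ^^ n) \<rho>) differentiable (at x)" using smooth_rho unfolding smooth_real_def by blast
  have smf: "\<And>n x. ((deriv ^^ n) f) differentiable (at x)" using smooth_f unfolding smooth_real_def by blast
  have dr1: "\<And>x. (\<rho> has_real_derivative r1 x) (at x)"
    using smr[of 0] unfolding r1_def by (simp add: DERIV_deriv_iff_real_differentiable)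
  have dr2: "\<And>x. (r1 has_real_derivative r2 x) (at x)"
    using smr[of 1] unfolding r2_def r1_def by (simp add: DERIV_deriv_iff_real_differentiable)
  have df1: "\<And>x. (f has_real_derivative f1 x) (at x)"
    using smf[of 0] unfolding f1_def by (simp add: DERIV_deriv_iff_real_differentiable)
  have df2: "\<And>x. (f1 has_real_derivative f2 x) (at x)"
    using smf[of 1] unfolding f2_def f1_def by (simp add: DERIV_deriv_iff_real_differentiable)
  have cr2: "\<And>x. isCont r2 x"
    using smr[of 2] unfolding r2_def r1_def
    by (simp add: differentiable_imp_continuous_within numeral_2_eq_2)
  have cf2: "\<And>x. isCont f2 x"
    using smf[of 2] unfolding f2_def f1_def
    by (simp add: differentiable_imp_continuous_within numeral_2_eq_2)
  have cr: "\<And>x. isCont \<rho> x" "\<And>x. isCont r1 x" "\<And>x. isCont f x" "\<And>x. isCont f1 x"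
    using dr1 dr2 df1 df2 by (blast intro: DERIV_isCont)+
  define G where "G x = r1 x ^ 2 + (\<rho> x * f1 x) ^ 2" for x
  define N where "N x = \<rho> x ^ 2 * f1 x ^ 3 + 2 * r1 x ^ 2 * f1 x + \<rho> x * r1 x * f2 x - \<rho> x * r2 x * f1 x" for x
  define hh where "hh x = (f1 x * G x + N x) / (G x * sqrt (G x))" for x
  have Gpos: "\<And>x. G x > 0"
  proof -
    fix x
    let ?e = "exp (\<i> * complex_of_real (f x))"
    have "((\<lambda>t. complex_of_real (\<rho> t) * exp (\<i> * complex_of_real (f t))) has_vector_derivative
        complex_of_real (\<rho> x) * (\<i> * of_real (f1 x) * ?e) + complex_of_real (r1 x) * ?e) (at x)"
      by (intro has_vector_derivative_mult has_vd_cexp df1 has_vector_derivative_of_real dr1)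
    then have "complex_of_real (\<rho> x) * (\<i> * of_real (f1 x) * ?e) + complex_of_real (r1 x) * ?e \<noteq> 0"
      using regular vector_derivative_at by metis
    then have "r1 x \<noteq> 0 \<or> \<rho> x * f1 x \<noteq> 0" by auto
    then show "G x > 0" unfolding G_def
      by (metis add_nonneg_pos add_pos_nonneg zero_le_power2 zero_less_power2)
  qed
  have Hn: "\<And>a b. norm (mean_curv_vec (twisted_F \<rho> f) a b) = \<bar>hh b\<bar>"
  proof -
    fix a b
    have "G b > 0" by (rule Gpos)
    then have "r1 b ^ 2 + (\<rho> b * f1 b) ^ 2 > 0" by (simp add: G_def)
    from H_norm[OF dr1 dr2 df1 df2 _ this, of a] rho_pos
    show "norm (mean_curv_vec (twisted_F \<rho> f) a b) = \<bar>hh b\<bar>"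
      using \<open>G b > 0\<close> by (simp add: Let_def hh_def G_def N_def abs_divide abs_mult)
  qed
  have constA: "(\<forall>\<alpha>\<in>{0..<2*pi}. \<forall>\<beta>\<in>{0..<2*pi}. \<rho> \<beta> * norm (mean_curv_vec (twisted_F \<rho> f) \<alpha> \<beta>) = 2)
     \<and> twisted_torus \<rho> f = {(z, w). cmod z = c / sqrt 2 \<and> cmod w = c / sqrt 2}"
    if cc: "\<forall>x. \<rho> x = c" for c
  proof -
    have rc: "\<rho> = (\<lambda>_. c)" using cc by auto
    have c0: "c > 0" using rho_pos cc by metis
    have r10: "\<And>x. r1 x = 0" using dr1 unfolding rc by (metis DERIV_const DERIV_unique)
    have r1f: "r1 = (\<lambda>_. 0)" using r10 by auto
    have r20: "\<And>x. r2 x = 0" using dr2 unfolding r1f by (metis DERIV_const DERIV_unique)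
    have f10: "\<And>x. f1 x \<noteq> 0" using Gpos by (simp add: G_def r10 cc)
    have part1: "\<forall>\<alpha>\<in>{0..<2*pi}. \<forall>\<beta>\<in>{0..<2*pi}. \<rho> \<beta> * norm (mean_curv_vec (twisted_F \<rho> f) \<alpha> \<beta>) = 2"
    proof (intro ballI)
      fix a b
      have sq: "sqrt (G b) = c * \<bar>f1 b\<bar>" unfolding G_def r10 rc using c0
        by (simp add: real_sqrt_abs abs_mult)
      have "hh b = (2 * c^2 * f1 b ^ 3) / (c^2 * f1 b ^ 2 * (c * \<bar>f1 b\<bar>))"
        unfolding hh_def sq by (simp add: G_def N_def r10 r20 cc power2_eq_square power3_eq_cube algebra_simps)
      then have e: "c * (hh b * \<bar>f1 b\<bar>) = f1 b * 2" using c0 f10[of b]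
        by (simp add: abs_divide abs_mult power2_eq_square power3_eq_cube field_simps)
      then have "\<bar>c * (hh b * \<bar>f1 b\<bar>)\<bar> = \<bar>f1 b * 2\<bar>" by simp
      then have "(c * \<bar>hh b\<bar>) * \<bar>f1 b\<bar> = 2 * \<bar>f1 b\<bar>" using c0 by (simp add: abs_mult)
      then have "c * \<bar>hh b\<bar> = 2" using f10[of b] by simp
      then show "\<rho> b * norm (mean_curv_vec (twisted_F \<rho> f) a b) = 2" by (simp add: Hn cc)
    qed
    have k0: "k \<noteq> 0"
    proof
      assume "k = 0"
      then have "f 0 = f (2*pi)" using f_per[rule_format, of 0] by simp
      moreover have "continuous_on {0..2*pi} f" using cr(3) by (simp add: continuous_at_imp_continuous_on)
      moreover have "\<And>x. f differentiable (at x)" using df1 real_differentiable_def by blast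
      ultimately obtain z where "0 < z" "z < 2*pi" "DERIV f z :> 0" using Rolle[of 0 "2*pi" f] by auto
      then show False using df1[of z] f10[of z] DERIV_unique by blast
    qed
    have part2: "twisted_torus \<rho> f = {(z, w). cmod z = c / sqrt 2 \<and> cmod w = c / sqrt 2}"
    proof
      show "twisted_torus \<rho> f \<subseteq> {(z, w). cmod z = c / sqrt 2 \<and> cmod w = c / sqrt 2}"
        unfolding twisted_torus_def twisted_F_def using c0
        by (auto simp: cc norm_mult norm_divide norm_exp_eq_Re)
      show "{(z, w). cmod z = c / sqrt 2 \<and> cmod w = c / sqrt 2} \<subseteq> twisted_torus \<rho> f"
      proof clarify
        fix z w assume z: "cmod z = c / sqrt 2" and w: "cmod w = c / sqrt 2"
        from torus_surj[OF _ f_per[rule_format, of 0, simplified] k0 z w] cr(3)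
        obtain a b where ab: "a \<in> {0..<2*pi}" "b \<in> {0..<2*pi}"
          "z = of_real (c / sqrt 2) * exp (\<i> * of_real (f b + a))"
          "w = of_real (c / sqrt 2) * exp (\<i> * of_real (f b - a))" by blast
        then have "(z, w) = twisted_F \<rho> f a b" unfolding twisted_F_def by (simp add: cc)
        then show "(z, w) \<in> twisted_torus \<rho> f" unfolding twisted_torus_def using ab(1,2) by force
      qed
    qed
    show ?thesis using part1 part2 by blast
  qed
  have constB: "\<exists>c. \<forall>x. \<rho> x = c" if "r1' > 0" "r2' > 0" "twisted_torus \<rho> f = {(z, w). cmod z = r1' \<and> cmod w = r2'}" for r1' r2'
  proof -
    have "\<forall>b\<in>{0..<2*pi}. \<rho> b = sqrt 2 * r1'"
    proof
      fix b assume b: "b \<in> {0..<2*pi}"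
      have "twisted_F \<rho> f 0 b \<in> twisted_torus \<rho> f" unfolding twisted_torus_def using b by force
      then have "cmod (complex_of_real (\<rho> b / sqrt 2) * exp (\<i> * complex_of_real (f b + 0))) = r1'"
        using that(3) unfolding twisted_F_def by auto
      then have "\<rho> b / sqrt 2 = r1'" using rho_pos[rule_format, of b] by (simp add: norm_mult norm_divide norm_exp_eq_Re)
      then show "\<rho> b = sqrt 2 * r1'" by (simp add: field_simps)
    qed
    then have "\<forall>x. \<rho> x = sqrt 2 * r1'" using per_red[OF rho_per] by metis
    then show ?thesis by blast
  qed
  have constC: "\<exists>c. \<forall>x. \<rho> x = c"
    if hyp: "\<forall>\<alpha>\<in>{0..<2*pi}. \<forall>\<beta>\<in>{0..<2*pi}. \<rho> \<beta> * norm (mean_curv_vec (twisted_F \<rho> f) \<alpha> \<beta>) = 2"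
  proof -
    define \<phi> where "\<phi> x = \<rho> x * hh x" for x
    have phi2: "\<bar>\<phi> b\<bar> = 2" if b: "b \<in> {0..<2*pi}" for b
    proof -
      have z: "(0::real) \<in> {0..<2*pi}" by simp
      have "\<rho> b * norm (mean_curv_vec (twisted_F \<rho> f) 0 b) = 2" using hyp z b by blast
      then have "\<rho> b * \<bar>hh b\<bar> = 2" by (simp only: Hn)
      moreover have "\<bar>\<rho> b\<bar> = \<rho> b" using rho_pos by (simp add: less_imp_le)
      ultimately show ?thesis unfolding \<phi>_def by (simp add: abs_mult)
    qed
    have cphi: "\<And>x. isCont \<phi> x"
    proof -
      fix x
      have "G x * sqrt (G x) \<noteq> 0" using Gpos[of x] by simp
      then show "isCont \<phi> x" unfolding \<phi>_def hh_def G_def N_def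
        by (intro continuous_intros cr cr2 cf2) (auto simp: G_def)
    qed
    have phic: "\<phi> b = \<phi> 0" if b: "b \<in> {0..<2*pi}" for b
    proof (rule ccontr)
      assume ne: "\<phi> b \<noteq> \<phi> 0"
      have p0: "\<bar>\<phi> 0\<bar> = 2" using phi2[of 0] by simp
      have pb: "\<bar>\<phi> b\<bar> = 2" using phi2 b by blast
      have "\<exists>x. 0 \<le> x \<and> x \<le> b \<and> \<phi> x = 0"
      proof (cases "\<phi> 0 > 0")
        case True
        then have "\<phi> b < 0" using ne p0 pb by linarith
        show ?thesis by (rule IVT2[where f=\<phi> and a=0 and b=b and y=0]) (use True \<open>\<phi> b < 0\<close> b cphi in auto)
      next
        case False
        then have "\<phi> b > 0" "\<phi> 0 < 0" using ne p0 pb by linarith+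
        show ?thesis by (rule IVT[where f=\<phi> and a=0 and b=b and y=0]) (use \<open>\<phi> b > 0\<close> \<open>\<phi> 0 < 0\<close> b cphi in auto)
      qed
      then obtain x where "0 \<le> x" "x \<le> b" "\<phi> x = 0" by blast
      moreover have "x \<in> {0..<2*pi}" using \<open>0 \<le> x\<close> \<open>x \<le> b\<close> b by auto
      ultimately show False using phi2[of x] by simp
    qed
    define \<epsilon> where "\<epsilon> = \<phi> 0 / 2"
    have "\<bar>\<phi> 0\<bar> = 2" using phi2[of 0] by simp
    then have eps: "\<epsilon> = 1 \<or> \<epsilon> = -1" unfolding \<epsilon>_def by linarith
    have phie: "\<epsilon> * \<phi> b = 2" if b: "b \<in> {0..<2*pi}" for b
    proof -
      have "\<phi> b = 2 * \<epsilon>" using phic[OF b] by (simp add: \<epsilon>_def)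
      then show ?thesis using eps by auto
    qed
    define Q where "Q x = \<rho> x ^ 2 - \<epsilon> * \<rho> x ^ 3 * f1 x / sqrt (r1 x ^ 2 + (\<rho> x * f1 x) ^ 2)" for x
    have dQ: "(Q has_real_derivative \<rho> x * r1 x * (2 - \<epsilon> * \<phi> x)) (at x)" for x
    proof -
      have "r1 x ^ 2 + (\<rho> x * f1 x) ^ 2 > 0" using Gpos[of x] by (simp add: G_def)
      from Q_deriv[OF dr1 dr2 df2 this, of \<epsilon>]
      show ?thesis unfolding Q_def[abs_def] \<phi>_def hh_def G_def N_def by (simp add: mult.assoc)
    qed
    obtain C where QC: "\<forall>x\<in>{0..<2*pi}. Q x = C"
    proof -
      have "\<exists>C. \<forall>x\<in>{0..<2*pi}. Q x = C"
      proof (rule has_field_derivative_zero_constant)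
        show "convex {0..<2*pi::real}" by (rule convex_real_interval)
        fix x assume x: "x \<in> {0..<2*pi::real}"
        have "(Q has_real_derivative 0) (at x)" using dQ[of x] phie[OF x] by simp
        then show "(Q has_field_derivative 0) (at x within {0..<2*pi})" by (rule has_field_derivative_at_within)
      qed
      then show ?thesis using that by blast
    qed
    obtain bM where bM: "bM \<in> {0..2*pi}" "\<forall>y\<in>{0..2*pi}. \<rho> y \<le> \<rho> bM"
      using continuous_attains_sup[of "{0..2*pi}" \<rho>] cr(1)
      by (auto simp: continuous_at_imp_continuous_on)
    define b0 where "b0 = (if bM = 2*pi then 0 else bM)"
    have b0: "b0 \<in> {0..<2*pi}" using bM(1) unfolding b0_def by auto
    have rb0: "\<rho> b0 = \<rho> bM" unfolding b0_def using rho_per[rule_format, of 0] by auto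
    have gmax: "\<forall>y. \<rho> y \<le> \<rho> b0"
    proof
      fix y
      obtain y' where "y' \<in> {0..<2*pi}" "\<rho> y = \<rho> y'" using per_red[OF rho_per] by blast
      then show "\<rho> y \<le> \<rho> b0" using bM(2) rb0 by auto
    qed
    have r1b0: "r1 b0 = 0" using DERIV_local_max[OF dr1[of b0], of 1] gmax by auto
    have rp: "\<rho> b0 > 0" using rho_pos by blast
    have f1b0: "f1 b0 \<noteq> 0" using Gpos[of b0] by (simp add: G_def r1b0)
    have sqb0: "sqrt (r1 b0 ^ 2 + (\<rho> b0 * f1 b0) ^ 2) = \<rho> b0 * \<bar>f1 b0\<bar>"
      using rp by (simp add: r1b0 real_sqrt_abs abs_mult)
    have Qb0: "Q b0 = \<rho> b0 ^ 2 - \<rho> b0 ^ 2 * (\<epsilon> * f1 b0 / \<bar>f1 b0\<bar>)"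
      unfolding Q_def sqb0 using rp f1b0 by (simp add: field_simps power2_eq_square power3_eq_cube)
    have "\<exists>c. \<forall>x\<in>{0..<2*pi}. \<rho> x = c"
    proof (cases "\<epsilon> * f1 b0 > 0")
      case True
      then have "\<epsilon> * f1 b0 = \<bar>f1 b0\<bar>" using eps by auto
      then have "Q b0 = 0" unfolding Qb0 using f1b0 by simp
      then have Q0: "\<forall>x\<in>{0..<2*pi}. Q x = 0" using QC b0 by auto
      have r1z: "r1 x = 0" if x: "x \<in> {0..<2*pi}" for x
      proof -
        let ?S = "sqrt (r1 x ^ 2 + (\<rho> x * f1 x) ^ 2)"
        have Sp: "?S > 0" using Gpos[of x] by (simp add: G_def)
        have rx: "\<rho> x > 0" using rho_pos by blast
        have "\<rho> x ^ 2 = \<epsilon> * \<rho> x ^ 3 * f1 x / ?S" using Q0 x unfolding Q_def by auto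
        then have "?S = \<epsilon> * \<rho> x * f1 x" using Sp rx
          by (simp add: field_simps power2_eq_square power3_eq_cube)
        then have "?S ^ 2 = (\<rho> x * f1 x) ^ 2" using eps by (auto simp: power2_eq_square)
        then have "r1 x ^ 2 + (\<rho> x * f1 x) ^ 2 = (\<rho> x * f1 x) ^ 2" using Gpos[of x] by (simp add: G_def)
        then show ?thesis by simp
      qed
      have "\<exists>c. \<forall>x\<in>{0..<2*pi}. \<rho> x = c"
      proof (rule has_field_derivative_zero_constant)
        show "convex {0..<2*pi::real}" by (rule convex_real_interval)
        fix x assume x: "x \<in> {0..<2*pi::real}"
        show "(\<rho> has_field_derivative 0) (at x within {0..<2*pi})"
          using dr1[of x] r1z[OF x] by (simp add: has_field_derivative_at_within)
      qed
      then show ?thesis .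
    next
      case False
      then have "\<epsilon> * f1 b0 < 0" using f1b0 eps by auto
      then have "\<epsilon> * f1 b0 = - \<bar>f1 b0\<bar>" using eps by auto
      then have "Q b0 = 2 * \<rho> b0 ^ 2" unfolding Qb0 using f1b0 by simp
      then have QM: "\<forall>x\<in>{0..<2*pi}. Q x = 2 * \<rho> b0 ^ 2" using QC b0 by auto
      have "\<rho> x = \<rho> b0" if x: "x \<in> {0..<2*pi}" for x
      proof -
        let ?S = "sqrt (r1 x ^ 2 + (\<rho> x * f1 x) ^ 2)"
        have Sp: "?S > 0" using Gpos[of x] by (simp add: G_def)
        have rx: "\<rho> x > 0" using rho_pos by blast
        have le: "\<bar>\<rho> x * f1 x\<bar> \<le> ?S"
          by (metis add_0 add_right_mono real_sqrt_abs real_sqrt_le_mono zero_le_power2)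
        have "\<bar>\<epsilon> * \<rho> x ^ 3 * f1 x / ?S\<bar> = \<rho> x ^ 2 * (\<bar>\<rho> x * f1 x\<bar> / ?S)"
          using eps rx Sp by (auto simp: abs_mult abs_divide power2_eq_square power3_eq_cube)
        also have "\<dots> \<le> \<rho> x ^ 2 * 1" using le Sp by (intro mult_left_mono) auto
        finally have "Q x \<le> 2 * \<rho> x ^ 2" unfolding Q_def by linarith
        then have "\<rho> b0 ^ 2 \<le> \<rho> x ^ 2" using QM x by auto
        then have "\<rho> b0 \<le> \<rho> x" using rx rp by (simp add: power_mono_iff)
        then show ?thesis using gmax by (simp add: order_antisym)
      qed
      then show ?thesis by blast
    qed
    then obtain c where c: "\<forall>x\<in>{0..<2*pi}. \<rho> x = c" by blast
    have "\<forall>x. \<rho> x = c" using per_red[OF rho_per] c by metis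
    then show ?thesis by blast
  qed
  show ?thesis
  proof
    assume "\<exists>r1 r2. r1 > 0 \<and> r2 > 0 \<and> twisted_torus \<rho> f = {(z, w). cmod z = r1 \<and> cmod w = r2}"
    then obtain c where "\<forall>x. \<rho> x = c" using constB by blast
    then show "\<forall>\<alpha>\<in>{0..<2*pi}. \<forall>\<beta>\<in>{0..<2*pi}. \<rho> \<beta> * norm (mean_curv_vec (twisted_F \<rho> f) \<alpha> \<beta>) = 2"
      using constA by blast
  next
    assume h: "\<forall>\<alpha>\<in>{0..<2*pi}. \<forall>\<beta>\<in>{0..<2*pi}. \<rho> \<beta> * norm (mean_curv_vec (twisted_F \<rho> f) \<alpha> \<beta>) = 2"
    then obtain c where cc: "\<forall>x. \<rho> x = c" using constC by blast
    have c0: "c > 0" using rho_pos cc by metis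
    have "twisted_torus \<rho> f = {(z, w). cmod z = c / sqrt 2 \<and> cmod w = c / sqrt 2}" using constA[OF cc] by blast
    then show "\<exists>r1 r2. r1 > 0 \<and> r2 > 0 \<and> twisted_torus \<rho> f = {(z, w). cmod z = r1 \<and> cmod w = r2}"
      using c0 by (intro exI[of _ "c / sqrt 2"]) auto
  qed
qed

end
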